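(* Let $\theta\in M_{k,d}([0,\infty))$ with rows $\theta_j$, $\beta>0$, $r\in(0,\infty)^k$. Suppose $\nu$ is a positive measure on $\mathbb{S}^d$ with total mass $\prod_{j=1}^k(\beta r_j)^{-1}$ satisfying $\prod_{j=1}^k(\operatorname{id}-e^{-\beta s_jr_j}R_{s_j\theta_j^T*})(\nu)\ge0$ for all $s\in[0,\infty)^k$. Let $\mu_\nu$ be the positive measure with \[ \int f\,d\mu_\nu=\lim_{s_k\to0^+}\cdots\lim_{s_1\to0^+}\frac{1}{s_k\cdots s_1}\int f\,d\Big(\prod_{j=1}^k\big(\operatorname{id}-e^{-\beta s_jr_j}R_{s_j\theta_j^T*}\big)(\nu)\Big), \] and for a positive measure $\mu$ let $\nu_\mu$ be the measure with $\int f\,d\nu_\mu=\int_{[0,\infty)^k}e^{-\beta w^Tr}\int_{\mathbb{S}^d}f(x+\theta^Tw)\,d\mu(x)\,dw$. Then $\nu=\nu_{\mu_\nu}$.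
   Context: $\mathbb{S}^d=\mathbb{R}^d/\mathbb{Z}^d$; functions on $\mathbb{S}^d$ are $\mathbb{Z}^d$-periodic functions on $\mathbb{R}^d$; $f$ ranges over $C(\mathbb{S}^d)$. Vectors are columns, $A^T$ transpose. $R_y(x)=x+y$ and $R_{y*}$ is pushforward of measures ($\int f\,dR_{y*}\mu=\int f\circ R_y\,d\mu$). "$\ge0$" means positive measure. (The iterated limits defining $\mu_\nu$ exist and define a positive measure.) *)

theory Defs
  imports "HOL-Analysis.Analysis"
begin

text \<open>Functions on the torus S^d = R^d / Z^d are Z^d-periodic functions on R^d.\<close>
definition periodic_fn :: "(real^'d \<Rightarrow> real) \<Rightarrow> bool" where
  "periodic_fn f \<longleftrightarrow> (\<forall>x z. (\<forall>i. z $ i \<in> \<int>) \<longrightarrow> f (x + z) = f x)"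

definition torus_test :: "(real^'d \<Rightarrow> real) \<Rightarrow> bool" where
  "torus_test f \<longleftrightarrow> continuous_on UNIV f \<and> periodic_fn f"

text \<open>(Signed) measures on S^d are represented by the functionals they induce on C(S^d).
  The operator id - exp(-beta s_j r_j) R_{s_j theta_j *} acting on such a functional:
  integral of f against R_{y*} Phi is Phi applied to f o R_y.\<close>
definition shift_op ::
  "real \<Rightarrow> (nat \<Rightarrow> real) \<Rightarrow> (nat \<Rightarrow> real^'d) \<Rightarrow> (nat \<Rightarrow> real) \<Rightarrow> nat
     \<Rightarrow> ((real^'d \<Rightarrow> real) \<Rightarrow> real) \<Rightarrow> ((real^'d \<Rightarrow> real) \<Rightarrow> real)" where
  "shift_op \<beta> r \<theta> s j \<Phi> = (\<lambda>f. \<Phi> f - exp (- (\<beta> * s j * r j)) * \<Phi> (\<lambda>x. f (x + s j *\<^sub>R \<theta> j)))"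

text \<open>The product over j = 0..n-1 of the operators above (they commute).\<close>
fun prod_ops ::
  "real \<Rightarrow> (nat \<Rightarrow> real) \<Rightarrow> (nat \<Rightarrow> real^'d) \<Rightarrow> (nat \<Rightarrow> real) \<Rightarrow> nat
     \<Rightarrow> ((real^'d \<Rightarrow> real) \<Rightarrow> real) \<Rightarrow> ((real^'d \<Rightarrow> real) \<Rightarrow> real)" where
  "prod_ops \<beta> r \<theta> s 0 \<Phi> = \<Phi>"
| "prod_ops \<beta> r \<theta> s (Suc n) \<Phi> = shift_op \<beta> r \<theta> s n (prod_ops \<beta> r \<theta> s n \<Phi>)"

text \<open>Iterated one-sided limit: has_iter_lim n G L means
  lim_{s_{n-1} -> 0+} ... lim_{s_0 -> 0+} G(s) = L (innermost limit in s_0),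
  where every inner limit exists for all sufficiently small positive values of the outer variables.\<close>
fun has_iter_lim :: "nat \<Rightarrow> ((nat \<Rightarrow> real) \<Rightarrow> real) \<Rightarrow> real \<Rightarrow> bool" where
  "has_iter_lim 0 G L \<longleftrightarrow> G (\<lambda>_. 0) = L"
| "has_iter_lim (Suc n) G L \<longleftrightarrow>
     (\<exists>h. (\<forall>\<^sub>F t in at_right 0. has_iter_lim n (\<lambda>s. G (s(n := t))) (h t))
          \<and> (h \<longlongrightarrow> L) (at_right 0))"

end

theory Submission
  imports Defs "HOL-Probability.Sinc_Integral"
begin

lemma bc_integrable:
  fixes f :: "'a::topological_space \<Rightarrow> real"
  assumes "finite_measure M" "sets M = sets borel" "continuous_on UNIV f" "\<And>x. \<bar>f x\<bar> \<le> B"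
  shows "integrable M f"
proof -
  interpret finite_measure M by fact
  have "f \<in> borel_measurable borel" using assms(3) by (rule borel_measurable_continuous_onI)
  then have m: "f \<in> borel_measurable M" using measurable_cong_sets[OF assms(2) refl] by blast
  show ?thesis by (rule integrable_const_bound[where B=B]) (use assms(4) m in auto)
qed

lemma bc_dc:
  fixes f :: "'a::topological_space \<Rightarrow> real"
  assumes "finite_measure M" "sets M = sets borel" "continuous_on UNIV f"
    "\<And>m. continuous_on UNIV (h m)" "\<And>m x. \<bar>h m x\<bar> \<le> B" "\<And>x. (\<lambda>m. h m x) \<longlonglongrightarrow> f x"
  shows "(\<lambda>m. \<integral>x. h m x \<partial>M) \<longlonglongrightarrow> (\<integral>x. f x \<partial>M)"
proof (rule integral_dominated_convergence[where w="\<lambda>_. B"])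
  interpret finite_measure M by fact
  show "f \<in> borel_measurable M" using borel_measurable_continuous_onI[OF assms(3)] measurable_cong_sets[OF assms(2) refl] by blast
  show "h m \<in> borel_measurable M" for m using borel_measurable_continuous_onI[OF assms(4)] measurable_cong_sets[OF assms(2) refl] by blast
  show "integrable M (\<lambda>_. B)" by simp
  show "AE x in M. (\<lambda>m. h m x) \<longlonglongrightarrow> f x" using assms(6) by simp
  show "AE x in M. norm (h m x) \<le> B" for m using assms(5) by simp
qed

lemma iter_lim_prod:
  fixes g :: "nat \<Rightarrow> real \<Rightarrow> complex"
  assumes lim: "\<And>j. j < m \<Longrightarrow> (g j \<longlongrightarrow> a j) (at_right 0)"
  shows "has_iter_lim m (\<lambda>s. Re (z * (\<Prod>j<m. g j (s j)))) L \<Longrightarrow> L = Re (z * (\<Prod>j<m. a j))"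
  using lim
proof (induction m arbitrary: z L)
  case 0
  then show ?case by simp
next
  case (Suc m)
  from Suc.prems(1) obtain h where ev: "\<forall>\<^sub>F t in at_right 0. has_iter_lim m (\<lambda>s. Re (z * (\<Prod>j<Suc m. g j ((s(m := t)) j)))) (h t)"
    and hL: "(h \<longlongrightarrow> L) (at_right 0)" by auto
  have eq: "(\<Prod>j<Suc m. g j ((s(m := t)) j)) = g m t * (\<Prod>j<m. g j (s j))" for s t
  proof -
    have "(\<Prod>j<m. g j ((s(m := t)) j)) = (\<Prod>j<m. g j (s j))" by (rule prod.cong) auto
    then show ?thesis by (simp add: prod.lessThan_Suc mult.commute)
  qed
  have ev3: "\<forall>\<^sub>F t in at_right 0. h t = Re ((z * g m t) * (\<Prod>j<m. a j))"
    using ev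
  proof eventually_elim
    case (elim t)
    then have hh: "has_iter_lim m (\<lambda>s. Re ((z * g m t) * (\<Prod>j<m. g j (s j)))) (h t)"
      unfolding eq by (simp only: mult.assoc)
    show ?case by (rule Suc.IH[OF hh]) (simp add: Suc.prems(2))
  qed
  have ev2: "\<forall>\<^sub>F t in at_right 0. Re ((z * g m t) * (\<Prod>j<m. a j)) = h t"
    using ev3 by (rule eventually_mono) simp
  have gm: "(g m \<longlongrightarrow> a m) (at_right 0)" using Suc.prems(2) by simp
  have "((\<lambda>t. Re ((z * g m t) * (\<Prod>j<m. a j))) \<longlongrightarrow> Re ((z * a m) * (\<Prod>j<m. a j))) (at_right 0)"
    by (intro tendsto_Re tendsto_mult tendsto_const gm)
  then have "(h \<longlongrightarrow> Re ((z * a m) * (\<Prod>j<m. a j))) (at_right 0)"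
    by (rule Lim_transform_eventually) (rule ev2)
  then have "L = Re ((z * a m) * (\<Prod>j<m. a j))"
    by (rule tendsto_unique[OF _ hL, rotated]) (simp add: trivial_limit_at_right_real)
  then show ?case by (simp add: prod.lessThan_Suc mult_ac)
qed

definition Zc :: "real^'d \<Rightarrow> real \<Rightarrow> ((real^'d \<Rightarrow> real) \<Rightarrow> real) \<Rightarrow> complex" where
  "Zc n c \<Psi> = Complex (\<Psi> (\<lambda>x. cos (2*pi*(n \<bullet> x) + c))) (\<Psi> (\<lambda>x. sin (2*pi*(n \<bullet> x) + c)))"

definition cc :: "real \<Rightarrow> (nat \<Rightarrow> real) \<Rightarrow> (nat \<Rightarrow> real^'d) \<Rightarrow> real^'d \<Rightarrow> nat \<Rightarrow> complex" where
  "cc \<beta> r \<theta> n j = Complex (\<beta> * r j) (-(2*pi*(n \<bullet> \<theta> j)))"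

lemma exp_cc: "exp (-(complex_of_real t * cc \<beta> r \<theta> n j)) =
   complex_of_real (exp (-(\<beta> * t * r j))) * cis (2*pi*(t * (n \<bullet> \<theta> j)))"
proof -
  have "-(complex_of_real t * cc \<beta> r \<theta> n j) = Complex (-(\<beta> * t * r j)) (2*pi*(t * (n \<bullet> \<theta> j)))"
    by (simp add: cc_def complex_eq_iff)
  then show ?thesis by (simp add: exp_eq_polar)
qed

lemma shift_Z: "Zc n c (shift_op \<beta> r \<theta> s j \<Psi>) =
  Zc n c \<Psi> - complex_of_real (exp (-(\<beta> * s j * r j))) * Zc n (c + 2*pi*(s j * (n \<bullet> \<theta> j))) \<Psi>"
proof -
  have e1: "(\<lambda>x. cos (2*pi*(n \<bullet> (x + s j *\<^sub>R \<theta> j)) + c)) = (\<lambda>x. cos (2*pi*(n \<bullet> x) + (c + 2*pi*(s j * (n \<bullet> \<theta> j)))))"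
    by (simp add: inner_add_right algebra_simps)
  have e2: "(\<lambda>x. sin (2*pi*(n \<bullet> (x + s j *\<^sub>R \<theta> j)) + c)) = (\<lambda>x. sin (2*pi*(n \<bullet> x) + (c + 2*pi*(s j * (n \<bullet> \<theta> j)))))"
    by (simp add: inner_add_right algebra_simps)
  have cx: "Complex (a - e*a') (b - e*b') = Complex a b - complex_of_real e * Complex a' b'" for a b a' b' e
    by (simp add: complex_eq_iff)
  show ?thesis unfolding Zc_def shift_op_def e1 e2 by (rule cx)
qed

lemma prod_Z:
  assumes "\<And>c. Zc n c \<Phi> = cis c * Zc n 0 \<Phi>"
  shows "Zc n c (prod_ops \<beta> r \<theta> s m \<Phi>) = cis c * (\<Prod>j<m. 1 - exp (-(complex_of_real (s j) * cc \<beta> r \<theta> n j))) * Zc n 0 \<Phi>"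
proof (induction m arbitrary: c)
  case 0
  have "Zc n c \<Phi> = cis c * Zc n 0 \<Phi>" by (rule assms)
  then show ?case by (simp only: prod_ops.simps(1) lessThan_0 prod.empty mult_1_right)
next
  case (Suc m)
  define P where "P = (\<Prod>j<m. 1 - exp (-(complex_of_real (s j) * cc \<beta> r \<theta> n j)))"
  define A where "A = Zc n 0 \<Phi>"
  define e where "e = exp (-(\<beta> * s m * r m))"
  define \<alpha> where "\<alpha> = 2*pi*(s m * (n \<bullet> \<theta> m))"
  have ih: "Zc n c' (prod_ops \<beta> r \<theta> s m \<Phi>) = cis c' * P * A" for c'
    unfolding P_def A_def by (rule Suc.IH)
  have "Zc n c (prod_ops \<beta> r \<theta> s (Suc m) \<Phi>) = Zc n c (prod_ops \<beta> r \<theta> s m \<Phi>) - complex_of_real e * Zc n (c + \<alpha>) (prod_ops \<beta> r \<theta> s m \<Phi>)"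
    unfolding prod_ops.simps(2) e_def \<alpha>_def by (rule shift_Z)
  also have "\<dots> = cis c * P * A - complex_of_real e * (cis (c + \<alpha>) * P * A)"
    by (simp only: ih)
  also have "cis (c + \<alpha>) = cis c * cis \<alpha>" by (simp only: cis_mult)
  also have "cis c * P * A - complex_of_real e * (cis c * cis \<alpha> * P * A) = cis c * (P * (1 - complex_of_real e * cis \<alpha>)) * A"
    by (simp only: ring_distribs mult_ac mult_1_left)
  also have "complex_of_real e * cis \<alpha> = exp (-(complex_of_real (s m) * cc \<beta> r \<theta> n m))"
    unfolding e_def \<alpha>_def by (rule exp_cc[symmetric])
  finally show ?case by (simp only: P_def A_def prod.lessThan_Suc)
qed

lemma g_lim:
  fixes c :: complex
  shows "((\<lambda>t. (1 - exp (-(complex_of_real t * c))) / complex_of_real t) \<longlongrightarrow> c) (at_right 0)"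
proof -
  have "((\<lambda>z::complex. exp (-(z * c))) has_field_derivative (exp (-(0*c)) * (-c))) (at 0)"
    by (auto intro!: derivative_eq_intros)
  then have "((\<lambda>z::complex. (exp (-(z * c)) - exp (-(0*c))) / (z - 0)) \<longlongrightarrow> -c) (at 0)"
    by (simp add: has_field_derivative_iff)
  then have l1: "((\<lambda>z::complex. (exp (-(z * c)) - 1) / z) \<longlongrightarrow> -c) (at 0)" by simp
  have fl: "filterlim complex_of_real (at 0) (at_right (0::real))"
  proof (rule filterlim_atI)
    show "(complex_of_real \<longlongrightarrow> 0) (at_right 0)"
      using tendsto_of_real[OF tendsto_ident_at[of "0::real" "{0<..}"]] by simp
    show "\<forall>\<^sub>F x in at_right 0. complex_of_real x \<noteq> 0"
      by (simp add: eventually_at_right_less eventually_mono[OF eventually_at_right_less])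
  qed
  have "((\<lambda>t. (exp (-(complex_of_real t * c)) - 1) / complex_of_real t) \<longlongrightarrow> -c) (at_right 0)"
    using filterlim_compose[OF l1 fl] by (simp add: o_def)
  from tendsto_minus[OF this] have "((\<lambda>t. - ((exp (-(complex_of_real t * c)) - 1) / complex_of_real t)) \<longlongrightarrow> c) (at_right 0)"
    by simp
  moreover have "\<And>t. - ((exp (-(complex_of_real t * c)) - 1) / complex_of_real t) = (1 - exp (-(complex_of_real t * c))) / complex_of_real t"
    by (simp only: minus_divide_left minus_diff_eq)
  ultimately show ?thesis by simp
qed

lemma Re_Zc: "Re (Zc n c \<Psi>) = \<Psi> (\<lambda>x. cos (2*pi*(n \<bullet> x) + c))" by (simp add: Zc_def)
lemma Im_Zc: "Im (Zc n c \<Psi>) = \<Psi> (\<lambda>x. sin (2*pi*(n \<bullet> x) + c))" by (simp add: Zc_def)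

lemma mu_rel:
  fixes \<nu> \<mu> :: "(real^'d) measure"
  assumes zn: "\<And>c. Zc n c (\<lambda>g. \<integral>x. g x \<partial>\<nu>) = cis c * Zc n 0 (\<lambda>g. \<integral>x. g x \<partial>\<nu>)"
  and hc: "has_iter_lim k (\<lambda>s. (1 / (\<Prod>j<k. s j)) * prod_ops \<beta> r \<theta> s k (\<lambda>g. \<integral>x. g x \<partial>\<nu>) (\<lambda>x. cos (2*pi*(n \<bullet> x) + 0)))
          (\<integral>x. cos (2*pi*(n \<bullet> x) + 0) \<partial>\<mu>)"
  and hs: "has_iter_lim k (\<lambda>s. (1 / (\<Prod>j<k. s j)) * prod_ops \<beta> r \<theta> s k (\<lambda>g. \<integral>x. g x \<partial>\<nu>) (\<lambda>x. sin (2*pi*(n \<bullet> x) + 0)))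
          (\<integral>x. sin (2*pi*(n \<bullet> x) + 0) \<partial>\<mu>)"
  shows "Zc n 0 (\<lambda>g. \<integral>x. g x \<partial>\<mu>) = (\<Prod>j<k. cc \<beta> r \<theta> n j) * Zc n 0 (\<lambda>g. \<integral>x. g x \<partial>\<nu>)"
proof -
  define Z where "Z = Zc n 0 (\<lambda>g. \<integral>x. g x \<partial>\<nu>)"
  define g where "g = (\<lambda>j t. (1 - exp (-(complex_of_real t * cc \<beta> r \<theta> n j))) / complex_of_real t)"
  have lim: "\<And>j. j < k \<Longrightarrow> (g j \<longlongrightarrow> cc \<beta> r \<theta> n j) (at_right 0)"
    unfolding g_def by (rule g_lim)
  have P: "Zc n 0 (prod_ops \<beta> r \<theta> s k (\<lambda>g. \<integral>x. g x \<partial>\<nu>)) = (\<Prod>j<k. 1 - exp (-(complex_of_real (s j) * cc \<beta> r \<theta> n j))) * Z" for s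
    using prod_Z[of n "\<lambda>g. \<integral>x. g x \<partial>\<nu>" 0 \<beta> r \<theta> s k, OF zn] by (simp add: Z_def)
  have gprod: "(\<Prod>j<k. g j (s j)) = (\<Prod>j<k. 1 - exp (-(complex_of_real (s j) * cc \<beta> r \<theta> n j))) / complex_of_real (\<Prod>j<k. s j)" for s
    by (simp add: g_def prod_dividef)
  have gq: "Re (W * (\<Prod>j<k. g j (s j))) = Re (W * (\<Prod>j<k. 1 - exp (-(complex_of_real (s j) * cc \<beta> r \<theta> n j)))) / (\<Prod>j<k. s j)" for W s
    unfolding gprod by (simp only: times_divide_eq_right Re_divide_of_real)
  have e1: "(1 / (\<Prod>j<k. s j)) * prod_ops \<beta> r \<theta> s k (\<lambda>g. \<integral>x. g x \<partial>\<nu>) (\<lambda>x. cos (2*pi*(n \<bullet> x) + 0))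
      = Re (Z * (\<Prod>j<k. g j (s j)))" for s
  proof -
    have "prod_ops \<beta> r \<theta> s k (\<lambda>g. \<integral>x. g x \<partial>\<nu>) (\<lambda>x. cos (2*pi*(n \<bullet> x) + 0)) = Re ((\<Prod>j<k. 1 - exp (-(complex_of_real (s j) * cc \<beta> r \<theta> n j))) * Z)"
      using arg_cong[OF P[of s], of Re] unfolding Re_Zc .
    then show ?thesis unfolding gq by (simp add: mult.commute)
  qed
  have e2: "(1 / (\<Prod>j<k. s j)) * prod_ops \<beta> r \<theta> s k (\<lambda>g. \<integral>x. g x \<partial>\<nu>) (\<lambda>x. sin (2*pi*(n \<bullet> x) + 0))
      = Re ((-\<i> * Z) * (\<Prod>j<k. g j (s j)))" for s
  proof -
    have "prod_ops \<beta> r \<theta> s k (\<lambda>g. \<integral>x. g x \<partial>\<nu>) (\<lambda>x. sin (2*pi*(n \<bullet> x) + 0)) = Im ((\<Prod>j<k. 1 - exp (-(complex_of_real (s j) * cc \<beta> r \<theta> n j))) * Z)"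
      using arg_cong[OF P[of s], of Im] unfolding Im_Zc .
    moreover have "Im (W * Z) = Re ((-\<i> * Z) * W)" for W by simp
    ultimately show ?thesis unfolding gq by (simp only:) simp
  qed
  have r1: "(\<integral>x. cos (2*pi*(n \<bullet> x) + 0) \<partial>\<mu>) = Re (Z * (\<Prod>j<k. cc \<beta> r \<theta> n j))"
    by (rule iter_lim_prod[OF lim]) (use hc e1 in simp_all)
  have r2: "(\<integral>x. sin (2*pi*(n \<bullet> x) + 0) \<partial>\<mu>) = Re ((-\<i> * Z) * (\<Prod>j<k. cc \<beta> r \<theta> n j))"
    by (rule iter_lim_prod[OF lim]) (use hs e2 in simp_all)
  show ?thesis using r1 r2 unfolding Z_def[symmetric] by (simp add: complex_eq_iff Re_Zc Im_Zc)
qed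

lemma int_Zc:
  fixes M :: "(real^'d) measure"
  assumes "finite_measure M" "sets M = sets borel"
  shows "Zc n c (\<lambda>g. \<integral>x. g x \<partial>M) = cis c * Zc n 0 (\<lambda>g. \<integral>x. g x \<partial>M)"
proof -
  have ic: "integrable M (\<lambda>x. cos (2*pi*(n \<bullet> x)))"
    by (rule bc_integrable[OF assms, where B=1]) (auto intro!: continuous_intros)
  have isn: "integrable M (\<lambda>x. sin (2*pi*(n \<bullet> x)))"
    by (rule bc_integrable[OF assms, where B=1]) (auto intro!: continuous_intros)
  have e1: "(\<lambda>x. cos (2*pi*(n \<bullet> x) + c)) = (\<lambda>x. cos c * cos (2*pi*(n \<bullet> x)) - sin c * sin (2*pi*(n \<bullet> x)))"
    by (simp add: cos_add mult.commute)
  have e2: "(\<lambda>x. sin (2*pi*(n \<bullet> x) + c)) = (\<lambda>x. cos c * sin (2*pi*(n \<bullet> x)) + sin c * cos (2*pi*(n \<bullet> x)))"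
    by (simp add: sin_add mult.commute)
  show ?thesis unfolding Zc_def e1 e2
    using ic isn by (simp add: complex_eq_iff cis.sel)
qed

lemma exp_int1:
  fixes c :: complex
  assumes a: "0 < Re c"
  shows "integrable (restrict_space lborel {0..}) (\<lambda>t. exp (-(complex_of_real t * c)))"
    and "integral\<^sup>L (restrict_space lborel {0..}) (\<lambda>t. exp (-(complex_of_real t * c))) = 1 / c"
proof -
  define f where "f = (\<lambda>t. exp (-(complex_of_real t * c)))"
  have fm: "f \<in> borel_measurable borel" unfolding f_def
    by (intro borel_measurable_continuous_onI continuous_intros)
  have w0: "integrable lborel (\<lambda>t. indicator {0<..} t *\<^sub>R exp (-(t * Re c)))"
    using integrable_I0i_exp_mscale[OF a] by (simp add: set_integrable_def)
  have w: "integrable lborel (\<lambda>t. indicator {0..} t *\<^sub>R exp (-(t * Re c)))"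
  proof (subst integrable_cong_AE[OF _ _ _])
    show "AE x in lborel. indicator {0..} x *\<^sub>R exp (-(x * Re c)) = indicator {0<..} x *\<^sub>R exp (-(x * Re c))"
      using AE_lborel_singleton[of 0] by eventually_elim (auto simp: indicator_def)
  qed (use w0 in auto)
  have fi: "integrable lborel (\<lambda>t. indicator {0..} t *\<^sub>R f t)"
  proof (rule Bochner_Integration.integrable_bound[OF w])
    show "(\<lambda>t. indicator {0..} t *\<^sub>R f t) \<in> borel_measurable lborel" using fm by measurable
    show "AE x in lborel. norm (indicator {0..} x *\<^sub>R f x) \<le> norm (indicator {0..} x *\<^sub>R exp (- (x * Re c)))"
      by (auto simp: f_def indicator_def norm_exp_eq_Re)
  qed
  show "integrable (restrict_space lborel {0..}) (\<lambda>t. exp (-(complex_of_real t * c)))"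
    using fi unfolding f_def by (subst integrable_restrict_space) auto
  have c0: "c \<noteq> 0" using a by auto
  define F where "F = (\<lambda>t::real. - exp (-(complex_of_real t * c)) / c)"
  have int_m: "integral\<^sup>L lborel (\<lambda>t. indicator {0..real m} t *\<^sub>R f t) = F (real m) - F 0" for m
  proof (rule integral_FTC_atLeastAtMost)
    show "(F has_vector_derivative f x) (at x within {0..real m})" for x
    proof -
      have "((\<lambda>z. - exp (-(z * c)) / c) has_field_derivative exp (-(complex_of_real x * c))) (at (complex_of_real x))"
        using c0 by (auto intro!: derivative_eq_intros)
      from has_vector_derivative_real_field[OF this] show ?thesis by (simp add: F_def f_def)
    qed
    show "continuous_on {0..real m} f" unfolding f_def by (intro continuous_intros)
  qed simp
  have lim1: "(\<lambda>m. integral\<^sup>L lborel (\<lambda>t. indicator {0..real m} t *\<^sub>R f t)) \<longlonglongrightarrow> integral\<^sup>L lborel (\<lambda>t. indicator {0..} t *\<^sub>R f t)"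
  proof (rule integral_dominated_convergence[OF _ _ w])
    show "(\<lambda>t. indicator {0..} t *\<^sub>R f t) \<in> borel_measurable lborel" using fm by measurable
    show "(\<lambda>t. indicator {0..real m} t *\<^sub>R f t) \<in> borel_measurable lborel" for m using fm by measurable
    show "AE x in lborel. norm (indicator {0..real m} x *\<^sub>R f x) \<le> indicator {0..} x *\<^sub>R exp (- (x * Re c))" for m
      by (auto simp: f_def indicator_def norm_exp_eq_Re)
    show "AE x in lborel. (\<lambda>m. indicator {0..real m} x *\<^sub>R f x) \<longlonglongrightarrow> indicator {0..} x *\<^sub>R f x"
    proof (rule AE_I2)
      fix x :: real
      show "(\<lambda>m. indicator {0..real m} x *\<^sub>R f x) \<longlonglongrightarrow> indicator {0..} x *\<^sub>R f x"
      proof (cases "0 \<le> x")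
        case True
        have "\<forall>\<^sub>F m in sequentially. indicator {0..real m} x *\<^sub>R f x = indicator {0..} x *\<^sub>R f x"
          using eventually_ge_at_top[of "nat \<lceil>x\<rceil>"] 
        proof eventually_elim
          case (elim m)
          have "x \<le> real (nat \<lceil>x\<rceil>)" by (rule real_nat_ceiling_ge)
          also have "\<dots> \<le> real m" using elim by simp
          finally show ?case using True by (simp add: indicator_def)
        qed
        then show ?thesis by (rule tendsto_eventually)
      next
        case False
        then show ?thesis by (simp add: indicator_def)
      qed
    qed
  qed
  have lim2: "(\<lambda>m. F (real m) - F 0) \<longlonglongrightarrow> 1 / c"
  proof -
    have "(\<lambda>m. exp (-(complex_of_real (real m) * c))) \<longlonglongrightarrow> 0"
    proof (rule tendsto_norm_zero_cancel)
      have "(\<lambda>m. exp (- (real m * Re c))) \<longlonglongrightarrow> 0"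
        using a by real_asymp
      then show "(\<lambda>m. norm (exp (-(complex_of_real (real m) * c)))) \<longlonglongrightarrow> 0"
        by (simp add: norm_exp_eq_Re)
    qed
    then have "(\<lambda>m. - exp (-(complex_of_real (real m) * c)) / c - (- exp (-(complex_of_real 0 * c)) / c)) \<longlonglongrightarrow> - 0 / c - (- exp (-(complex_of_real 0 * c)) / c)"
      using c0 by (intro tendsto_intros) auto
    then show ?thesis by (simp add: F_def)
  qed
  have "integral\<^sup>L lborel (\<lambda>t. indicator {0..} t *\<^sub>R f t) = 1 / c"
    using LIMSEQ_unique[OF lim1] lim2 int_m by simp
  then show "integral\<^sup>L (restrict_space lborel {0..}) (\<lambda>t. exp (-(complex_of_real t * c))) = 1 / c"
  proof -
    have "integral\<^sup>L (restrict_space lborel {0..}) f = integral\<^sup>L lborel (\<lambda>t. indicator {0..} t *\<^sub>R f t)"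
      by (rule integral_restrict_space) simp
    also have "\<dots> = 1 / c" by fact
    finally show ?thesis unfolding f_def .
  qed
qed

lemma psf: "product_sigma_finite (\<lambda>_::nat. restrict_space lborel ({0..}::real set))"
  unfolding product_sigma_finite_def
  by (auto intro!: sigma_finite_measure_restrict_space lborel.sigma_finite_measure_axioms)

lemma exp_prod_cc:
  "(\<Prod>j<k. exp (-(complex_of_real (w j) * cc \<beta> r \<theta> n j))) =
   complex_of_real (exp (-(\<beta> * (\<Sum>j<k. w j * r j)))) * cis (2*pi*(n \<bullet> (\<Sum>j<k. w j *\<^sub>R \<theta> j)))"
proof -
  have "(\<Prod>j<k. exp (-(complex_of_real (w j) * cc \<beta> r \<theta> n j))) = exp (\<Sum>j<k. -(complex_of_real (w j) * cc \<beta> r \<theta> n j))"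
    by (simp add: exp_sum)
  also have "\<dots> = complex_of_real (exp (Re (\<Sum>j<k. -(complex_of_real (w j) * cc \<beta> r \<theta> n j)))) * cis (Im (\<Sum>j<k. -(complex_of_real (w j) * cc \<beta> r \<theta> n j)))"
    by (rule exp_eq_polar)
  also have "Re (\<Sum>j<k. -(complex_of_real (w j) * cc \<beta> r \<theta> n j)) = -(\<beta> * (\<Sum>j<k. w j * r j))"
    by (simp add: Re_sum cc_def sum_distrib_left sum_negf algebra_simps)
  also have "Im (\<Sum>j<k. -(complex_of_real (w j) * cc \<beta> r \<theta> n j)) = 2*pi*(n \<bullet> (\<Sum>j<k. w j *\<^sub>R \<theta> j))"
    by (simp add: Im_sum cc_def sum_distrib_left inner_sum_right algebra_simps)
  finally show ?thesis .
qed

lemma rhs_cos: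
  fixes \<mu> :: "(real^'d) measure" and n :: "real^'d" and a c :: real and \<theta> :: "nat \<Rightarrow> real^'d"
  assumes fm: "finite_measure \<mu>" "sets \<mu> = sets borel" and bp: "\<beta> > 0" and rp: "\<forall>j<k. r j > 0"
  defines "Zm \<equiv> Zc n 0 (\<lambda>g. \<integral>x. g x \<partial>\<mu>)"
  shows "\<And>w. exp (-(\<beta> * (\<Sum>j<k. w j * r j))) * (\<integral>x. a * cos (2*pi*(n \<bullet> (x + (\<Sum>j<k. w j *\<^sub>R \<theta> j))) + c) \<partial>\<mu>)
        = Re (complex_of_real a * cis c * Zm * (\<Prod>j<k. exp (-(complex_of_real (w j) * cc \<beta> r \<theta> n j))))"
    and "integrable (PiM {..<k} (\<lambda>_. restrict_space lborel {0..}))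
          (\<lambda>w. Re (complex_of_real a * cis c * Zm * (\<Prod>j<k. exp (-(complex_of_real (w j) * cc \<beta> r \<theta> n j)))))"
    and "(\<integral>w. Re (complex_of_real a * cis c * Zm * (\<Prod>j<k. exp (-(complex_of_real (w j) * cc \<beta> r \<theta> n j)))) \<partial>(PiM {..<k} (\<lambda>_. restrict_space lborel {0..})))
         = Re (complex_of_real a * cis c * Zm / (\<Prod>j<k. cc \<beta> r \<theta> n j))"
proof -
  fix w :: "nat \<Rightarrow> real"
  define y where "y = (\<Sum>j<k. w j *\<^sub>R \<theta> j)"
  have ic: "integrable \<mu> (\<lambda>x. cos (2*pi*(n \<bullet> x) + c'))" for c'
    by (rule bc_integrable[OF fm, where B=1]) (auto intro!: continuous_intros)
  have "(\<integral>x. a * cos (2*pi*(n \<bullet> (x + y)) + c) \<partial>\<mu>) = a * (\<integral>x. cos (2*pi*(n \<bullet> x) + (c + 2*pi*(n \<bullet> y))) \<partial>\<mu>)"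
    by (simp add: inner_add_right algebra_simps)
  also have "(\<integral>x. cos (2*pi*(n \<bullet> x) + (c + 2*pi*(n \<bullet> y))) \<partial>\<mu>) = Re (Zc n (c + 2*pi*(n \<bullet> y)) (\<lambda>g. \<integral>x. g x \<partial>\<mu>))"
    by (simp add: Re_Zc)
  also have "\<dots> = Re (cis (c + 2*pi*(n \<bullet> y)) * Zm)"
    unfolding Zm_def by (subst int_Zc[OF fm]) simp
  finally have calc: "(\<integral>x. a * cos (2*pi*(n \<bullet> (x + y)) + c) \<partial>\<mu>) = a * Re (cis (c + 2*pi*(n \<bullet> y)) * Zm)" .
  define E where "E = exp (-(\<beta> * (\<Sum>j<k. w j * r j)))"
  define t where "t = 2*pi*(n \<bullet> y)"
  have "complex_of_real a * cis c * Zm * (complex_of_real E * cis t) = complex_of_real (E * a) * (cis (c + t) * Zm)"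
    by (simp only: cis_mult[symmetric] of_real_mult mult_ac)
  moreover have Reof: "\<And>x z. Re (complex_of_real x * z) = x * Re z" by simp
  ultimately have "Re (complex_of_real a * cis c * Zm * (complex_of_real E * cis t)) = E * (a * Re (cis (c + t) * Zm))"
    by (simp only: Reof mult.assoc)
  then show "exp (-(\<beta> * (\<Sum>j<k. w j * r j))) * (\<integral>x. a * cos (2*pi*(n \<bullet> (x + (\<Sum>j<k. w j *\<^sub>R \<theta> j))) + c) \<partial>\<mu>)
        = Re (complex_of_real a * cis c * Zm * (\<Prod>j<k. exp (-(complex_of_real (w j) * cc \<beta> r \<theta> n j))))"
    unfolding exp_prod_cc y_def[symmetric] E_def[symmetric] t_def[symmetric] calc by simp
next
  interpret product_sigma_finite "\<lambda>_::nat. restrict_space lborel ({0..}::real set)" by (rule psf)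
  have Rec: "0 < Re (cc \<beta> r \<theta> n j)" if "j < k" for j
    using bp rp that by (simp add: cc_def)
  have pi: "integrable (PiM {..<k} (\<lambda>_. restrict_space lborel {0..})) (\<lambda>w. \<Prod>j<k. exp (-(complex_of_real (w j) * cc \<beta> r \<theta> n j)))"
    by (rule product_integrable_prod) (auto intro: exp_int1(1)[OF Rec])
  then show "integrable (PiM {..<k} (\<lambda>_. restrict_space lborel {0..}))
          (\<lambda>w. Re (complex_of_real a * cis c * Zm * (\<Prod>j<k. exp (-(complex_of_real (w j) * cc \<beta> r \<theta> n j)))))"
    by auto
  have calculation_int: "(\<integral>w. (\<Prod>j<k. exp (-(complex_of_real (w j) * cc \<beta> r \<theta> n j))) \<partial>(PiM {..<k} (\<lambda>_. restrict_space lborel {0..})))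
      = (\<Prod>j<k. 1 / cc \<beta> r \<theta> n j)"
    by (subst product_integral_prod) (auto intro: exp_int1[OF Rec] intro!: prod.cong)
  show "(\<integral>w. Re (complex_of_real a * cis c * Zm * (\<Prod>j<k. exp (-(complex_of_real (w j) * cc \<beta> r \<theta> n j)))) \<partial>(PiM {..<k} (\<lambda>_. restrict_space lborel {0..})))
         = Re (complex_of_real a * cis c * Zm / (\<Prod>j<k. cc \<beta> r \<theta> n j))"
  proof -
    let ?K = "complex_of_real a * cis c * Zm"
    let ?P = "PiM {..<k} (\<lambda>_. restrict_space lborel ({0..}::real set))"
    have "(\<integral>w. Re (?K * (\<Prod>j<k. exp (-(complex_of_real (w j) * cc \<beta> r \<theta> n j)))) \<partial>?P)
        = Re (\<integral>w. ?K * (\<Prod>j<k. exp (-(complex_of_real (w j) * cc \<beta> r \<theta> n j))) \<partial>?P)"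
      by (rule integral_Re) (rule integrable_mult_right[OF pi])
    also have "(\<integral>w. ?K * (\<Prod>j<k. exp (-(complex_of_real (w j) * cc \<beta> r \<theta> n j))) \<partial>?P)
        = ?K * (\<integral>w. (\<Prod>j<k. exp (-(complex_of_real (w j) * cc \<beta> r \<theta> n j))) \<partial>?P)"
      by (rule integral_mult_right_zero)
    also have "\<dots> = ?K * (\<Prod>j<k. 1 / cc \<beta> r \<theta> n j)" by (simp only: calculation_int)
    also have "\<dots> = ?K / (\<Prod>j<k. cc \<beta> r \<theta> n j)" by (simp only: prod_dividef prod.neutral_const) simp
    finally show ?thesis .
  qed
qed

lemma per_cos: "m \<in> \<int> \<Longrightarrow> cos (t + 2*pi*m) = cos t"
  by (elim Ints_cases) (simp add: cos_add)
lemma per_sin: "m \<in> \<int> \<Longrightarrow> sin (t + 2*pi*m) = sin t"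
  by (elim Ints_cases) (simp add: sin_add)

lemma inner_Ints: "(\<forall>i. n $ i \<in> \<int>) \<Longrightarrow> (\<forall>i. z $ i \<in> \<int>) \<Longrightarrow> (n::real^'d) \<bullet> z \<in> \<int>"
  unfolding inner_vec_def by (auto intro!: Ints_sum Ints_mult)

lemma tt_cos: "(\<forall>i. n $ i \<in> \<int>) \<Longrightarrow> torus_test (\<lambda>x::real^'d. cos (2*pi*(n \<bullet> x) + c))"
  unfolding torus_test_def periodic_fn_def
proof (intro conjI allI impI)
  fix x z :: "real^'d" assume n: "\<forall>i. n $ i \<in> \<int>" and z: "\<forall>i. z $ i \<in> \<int>"
  have "cos (2*pi*(n \<bullet> (x + z)) + c) = cos ((2*pi*(n \<bullet> x) + c) + 2*pi*(n \<bullet> z))"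
    by (simp add: inner_add_right algebra_simps)
  also have "\<dots> = cos (2*pi*(n \<bullet> x) + c)" by (rule per_cos[OF inner_Ints[OF n z]])
  finally show "cos (2*pi*(n \<bullet> (x + z)) + c) = cos (2*pi*(n \<bullet> x) + c)" .
qed (auto intro!: continuous_intros)

lemma tt_sin: "(\<forall>i. n $ i \<in> \<int>) \<Longrightarrow> torus_test (\<lambda>x::real^'d. sin (2*pi*(n \<bullet> x) + c))"
  unfolding torus_test_def periodic_fn_def
proof (intro conjI allI impI)
  fix x z :: "real^'d" assume n: "\<forall>i. n $ i \<in> \<int>" and z: "\<forall>i. z $ i \<in> \<int>"
  have "sin (2*pi*(n \<bullet> (x + z)) + c) = sin ((2*pi*(n \<bullet> x) + c) + 2*pi*(n \<bullet> z))"
    by (simp add: inner_add_right algebra_simps)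
  also have "\<dots> = sin (2*pi*(n \<bullet> x) + c)" by (rule per_sin[OF inner_Ints[OF n z]])
  finally show "sin (2*pi*(n \<bullet> (x + z)) + c) = sin (2*pi*(n \<bullet> x) + c)" .
qed (auto intro!: continuous_intros)

inductive trig :: "(real^'d \<Rightarrow> real) \<Rightarrow> bool" where
  base: "(\<forall>i. n $ i \<in> \<int>) \<Longrightarrow> trig (\<lambda>x. a * cos (2*pi*(n \<bullet> x) + c))"
| add: "trig f \<Longrightarrow> trig g \<Longrightarrow> trig (\<lambda>x. f x + g x)"

lemma trig_bc: "trig f \<Longrightarrow> continuous_on UNIV f \<and> (\<exists>B. \<forall>x. \<bar>f x\<bar> \<le> B)"
proof (induction rule: trig.induct)
  case (base n a c)
  have "\<bar>a * cos (2*pi*(n \<bullet> x) + c)\<bar> \<le> \<bar>a\<bar>" for x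
    by (simp add: abs_mult mult_left_le)
  then show ?case by (auto intro!: continuous_intros)
next
  case (add f g)
  then obtain B1 B2 where "\<forall>x. \<bar>f x\<bar> \<le> B1" "\<forall>x. \<bar>g x\<bar> \<le> B2" by auto
  then have "\<forall>x. \<bar>f x + g x\<bar> \<le> B1 + B2" by (meson abs_triangle_ineq add_mono order_trans)
  with add show ?case by (auto intro!: continuous_intros)
qed

definition RI :: "(real^'d) measure \<Rightarrow> real \<Rightarrow> (nat \<Rightarrow> real) \<Rightarrow> (nat \<Rightarrow> real^'d) \<Rightarrow> nat \<Rightarrow> (real^'d \<Rightarrow> real) \<Rightarrow> (nat \<Rightarrow> real) \<Rightarrow> real" where
  "RI \<mu> \<beta> r \<theta> k f = (\<lambda>w. exp (-(\<beta> * (\<Sum>j<k. w j * r j))) * (\<integral>x. f (x + (\<Sum>j<k. w j *\<^sub>R \<theta> j)) \<partial>\<mu>))"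

lemma cont_shift: "continuous_on UNIV (\<lambda>x::'a::real_normed_vector. x + y)"
  by (intro continuous_on_add continuous_on_id continuous_on_const)

lemma shift_bc:
  fixes f :: "real^'d \<Rightarrow> real"
  assumes "continuous_on UNIV f" "\<forall>x. \<bar>f x\<bar> \<le> B"
  shows "continuous_on UNIV (\<lambda>x. f (x + y))" "\<forall>x. \<bar>f (x + y)\<bar> \<le> B"
proof -
  show "continuous_on UNIV (\<lambda>x. f (x + y))"
    by (rule continuous_on_compose2[OF assms(1) cont_shift]) simp
qed (use assms in auto)

lemma trig_id:
  fixes \<nu> \<mu> :: "(real^'d) measure"
  assumes fn: "finite_measure \<nu>" "sets \<nu> = sets borel"
    and fm: "finite_measure \<mu>" "sets \<mu> = sets borel"
    and bp: "\<beta> > 0" and rp: "\<forall>j<k. r j > 0"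
    and mu_def: "\<forall>f. torus_test f \<longrightarrow>
        has_iter_lim k (\<lambda>s. (1 / (\<Prod>j<k. s j)) * prod_ops \<beta> r \<theta> s k (\<lambda>g. \<integral>x. g x \<partial>\<nu>) f)
          (\<integral>x. f x \<partial>\<mu>)"
  shows "trig f \<Longrightarrow> integrable (PiM {..<k} (\<lambda>_. restrict_space lborel {0..})) (RI \<mu> \<beta> r \<theta> k f)
     \<and> (\<integral>x. f x \<partial>\<nu>) = (\<integral>w. RI \<mu> \<beta> r \<theta> k f w \<partial>(PiM {..<k} (\<lambda>_. restrict_space lborel {0..})))"
proof (induction rule: trig.induct)
  case (base n a c)
  define Zm where "Zm = Zc n 0 (\<lambda>g. \<integral>x. g x \<partial>\<mu>)"
  define Zn where "Zn = Zc n 0 (\<lambda>g. \<integral>x. g x \<partial>\<nu>)"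
  have rel: "Zm = (\<Prod>j<k. cc \<beta> r \<theta> n j) * Zn"
    unfolding Zm_def Zn_def
    by (rule mu_rel[OF int_Zc[OF fn] mu_def[rule_format, OF tt_cos[OF base]] mu_def[rule_format, OF tt_sin[OF base]]])
  have nz1: "cc \<beta> r \<theta> n j \<noteq> 0" if "j < k" for j
  proof -
    have "r j > 0" using rp that by simp
    then show ?thesis using bp by (simp add: cc_def complex_eq_iff)
  qed
  have nz: "(\<Prod>j<k. cc \<beta> r \<theta> n j) \<noteq> 0"
    using nz1 by (simp add: prod_zero_iff)
  have RIeq: "RI \<mu> \<beta> r \<theta> k (\<lambda>x. a * cos (2*pi*(n \<bullet> x) + c)) =
     (\<lambda>w. Re (complex_of_real a * cis c * Zm * (\<Prod>j<k. exp (-(complex_of_real (w j) * cc \<beta> r \<theta> n j)))))"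
    unfolding RI_def Zm_def by (rule ext) (rule rhs_cos(1)[OF fm bp rp])
  have ic: "integrable \<nu> (\<lambda>x. cos (2*pi*(n \<bullet> x) + c))"
    by (rule bc_integrable[OF fn, where B=1]) (auto intro!: continuous_intros)
  have lhs: "(\<integral>x. a * cos (2*pi*(n \<bullet> x) + c) \<partial>\<nu>) = Re (complex_of_real a * cis c * Zn)"
  proof -
    have "(\<integral>x. a * cos (2*pi*(n \<bullet> x) + c) \<partial>\<nu>) = a * Re (Zc n c (\<lambda>g. \<integral>x. g x \<partial>\<nu>))"
      by (simp add: Re_Zc)
    also have "\<dots> = Re (complex_of_real a * cis c * Zn)"
      unfolding Zn_def by (subst int_Zc[OF fn]) (simp add: mult.assoc)
    finally show ?thesis .
  qed
  note i23 = rhs_cos(2,3)[OF fm bp rp, where n=n and a=a and c=c and \<theta>=\<theta>]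
  have eqK: "complex_of_real a * cis c * Zm / (\<Prod>j<k. cc \<beta> r \<theta> n j) = complex_of_real a * cis c * Zn"
    using nz unfolding rel by simp
  show ?case
    unfolding RIeq
  proof (intro conjI)
    show "integrable (PiM {..<k} (\<lambda>_. restrict_space lborel {0..}))
          (\<lambda>w. Re (complex_of_real a * cis c * Zm * (\<Prod>j<k. exp (-(complex_of_real (w j) * cc \<beta> r \<theta> n j)))))"
      using i23(1) unfolding Zm_def .
    show "(\<integral>x. a * cos (2*pi*(n \<bullet> x) + c) \<partial>\<nu>) = (\<integral>w. Re (complex_of_real a * cis c * Zm * (\<Prod>j<k. exp (-(complex_of_real (w j) * cc \<beta> r \<theta> n j)))) \<partial>(PiM {..<k} (\<lambda>_. restrict_space lborel {0..})))"
      using i23(2) unfolding Zm_def[symmetric] eqK lhs by simp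
  qed
next
  case (add f g)
  have tf: "continuous_on UNIV f \<and> (\<exists>B. \<forall>x. \<bar>f x\<bar> \<le> B)" by (rule trig_bc) (rule add.hyps(1))
  have tg: "continuous_on UNIV g \<and> (\<exists>B. \<forall>x. \<bar>g x\<bar> \<le> B)" by (rule trig_bc) (rule add.hyps(2))
  from tf obtain Bf where bf: "continuous_on UNIV f" "\<forall>x. \<bar>f x\<bar> \<le> Bf" by blast
  from tg obtain Bg where bg: "continuous_on UNIV g" "\<forall>x. \<bar>g x\<bar> \<le> Bg" by blast
  have "RI \<mu> \<beta> r \<theta> k (\<lambda>x. f x + g x) = (\<lambda>w. RI \<mu> \<beta> r \<theta> k f w + RI \<mu> \<beta> r \<theta> k g w)"
  proof (rule ext)
    fix w
    define y where "y = (\<Sum>j<k. w j *\<^sub>R \<theta> j)"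
    have "integrable \<mu> (\<lambda>x. f (x + y))" "integrable \<mu> (\<lambda>x. g (x + y))"
      using bc_integrable[OF fm shift_bc(1)[OF bf] shift_bc(2)[OF bf, rule_format]]
        bc_integrable[OF fm shift_bc(1)[OF bg] shift_bc(2)[OF bg, rule_format]] by auto
    then show "RI \<mu> \<beta> r \<theta> k (\<lambda>x. f x + g x) w = RI \<mu> \<beta> r \<theta> k f w + RI \<mu> \<beta> r \<theta> k g w"
      unfolding RI_def y_def[symmetric] by (simp add: distrib_left)
  qed
  moreover have "(\<integral>x. f x + g x \<partial>\<nu>) = (\<integral>x. f x \<partial>\<nu>) + (\<integral>x. g x \<partial>\<nu>)"
    using bc_integrable[OF fn bf(1) bf(2)[rule_format]] bc_integrable[OF fn bg(1) bg(2)[rule_format]] by simp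
  ultimately show ?case using add.IH by simp
qed

lemma trig_const: "trig (\<lambda>x::real^'d. a)"
  using trig.base[of 0 a 0] by simp

lemma trig_scale: "trig f \<Longrightarrow> trig (\<lambda>x. a * f x)"
proof (induction rule: trig.induct)
  case (base n b c)
  then show ?case using trig.base[OF base, of "a*b" c] by (simp add: mult.assoc)
next
  case (add f g)
  then show ?case using trig.add[OF add.IH] by (simp add: distrib_left)
qed

lemma int_vec_add: "(\<forall>i. n $ i \<in> \<int>) \<Longrightarrow> (\<forall>i. m $ i \<in> \<int>) \<Longrightarrow> (\<forall>i. (n + m) $ i \<in> \<int>)"
  by auto
lemma int_vec_diff: "(\<forall>i. n $ i \<in> \<int>) \<Longrightarrow> (\<forall>i. m $ i \<in> \<int>) \<Longrightarrow> (\<forall>i. (n - m) $ i \<in> \<int>)"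
  by auto

lemma trig_mult_base:
  assumes n: "\<forall>i. n $ i \<in> \<int>"
  shows "trig g \<Longrightarrow> trig (\<lambda>x. (a * cos (2*pi*(n \<bullet> x) + c)) * g x)"
proof (induction rule: trig.induct)
  case (base m b d)
  have "trig (\<lambda>x. (a*b/2) * cos (2*pi*((n - m) \<bullet> x) + (c - d)) + (a*b/2) * cos (2*pi*((n + m) \<bullet> x) + (c + d)))"
    by (intro trig.add trig.base int_vec_add int_vec_diff n base)
  moreover have "(\<lambda>x. (a*b/2) * cos (2*pi*((n - m) \<bullet> x) + (c - d)) + (a*b/2) * cos (2*pi*((n + m) \<bullet> x) + (c + d)))
      = (\<lambda>x. (a * cos (2*pi*(n \<bullet> x) + c)) * (b * cos (2*pi*(m \<bullet> x) + d)))"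
  proof (rule ext)
    fix x
    have "cos (2*pi*(n \<bullet> x) + c) * cos (2*pi*(m \<bullet> x) + d)
        = (cos ((2*pi*(n \<bullet> x) + c) - (2*pi*(m \<bullet> x) + d)) + cos ((2*pi*(n \<bullet> x) + c) + (2*pi*(m \<bullet> x) + d))) / 2"
      by (rule cos_times_cos)
    also have "(2*pi*(n \<bullet> x) + c) - (2*pi*(m \<bullet> x) + d) = 2*pi*((n - m) \<bullet> x) + (c - d)"
      by (simp add: inner_diff_left algebra_simps)
    also have "(2*pi*(n \<bullet> x) + c) + (2*pi*(m \<bullet> x) + d) = 2*pi*((n + m) \<bullet> x) + (c + d)"
      by (simp add: inner_add_left algebra_simps)
    finally have eq: "cos (2*pi*(n \<bullet> x) + c) * cos (2*pi*(m \<bullet> x) + d) =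
       (cos (2*pi*((n - m) \<bullet> x) + (c - d)) + cos (2*pi*((n + m) \<bullet> x) + (c + d))) / 2" .
    have aux: "(p/2) * X + (p/2) * Y = p * ((X + Y)/2)" for p X Y :: real by (simp add: field_simps)
    show "(a*b/2) * cos (2*pi*((n - m) \<bullet> x) + (c - d)) + (a*b/2) * cos (2*pi*((n + m) \<bullet> x) + (c + d))
      = (a * cos (2*pi*(n \<bullet> x) + c)) * (b * cos (2*pi*(m \<bullet> x) + d))"
      unfolding aux eq[symmetric] by (simp only: mult_ac)
  qed
  ultimately show ?case by simp
next
  case (add f g)
  then show ?case using trig.add[OF add.IH] by (simp add: distrib_left)
qed

lemma trig_mult: "trig f \<Longrightarrow> trig g \<Longrightarrow> trig (\<lambda>x. f x * g x)"
proof (induction rule: trig.induct)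
  case (base n a c)
  then show ?case by (rule trig_mult_base)
next
  case (add f1 f2)
  then show ?case using trig.add[OF add.IH] by (simp add: distrib_right)
qed

lemma trig_sum: "finite S \<Longrightarrow> (\<And>i. i \<in> S \<Longrightarrow> trig (f i)) \<Longrightarrow> trig (\<lambda>x. \<Sum>i\<in>S. f i x)"
proof (induction rule: finite_induct)
  case empty
  then show ?case using trig_const[of 0] by simp
next
  case (insert i S)
  then show ?case using trig.add[of "f i" "\<lambda>x. \<Sum>i\<in>S. f i x"] by simp
qed

lemma Basis_int: "b \<in> (Basis :: (real^'d) set) \<Longrightarrow> \<forall>i. b $ i \<in> \<int>"
  by (auto simp: Basis_vec_def axis_def)

definition phi :: "real^'d \<Rightarrow> (real^'d) \<times> (real^'d)" where
  "phi x = ((\<Sum>b\<in>Basis. cos (2*pi*(x \<bullet> b)) *\<^sub>R b), (\<Sum>b\<in>Basis. sin (2*pi*(x \<bullet> b)) *\<^sub>R b))"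

lemma trig_lin:
  fixes L :: "(real^'d) \<times> (real^'d) \<Rightarrow> real"
  assumes L: "bounded_linear L"
  shows "trig (\<lambda>x. L (phi x))"
proof -
  define L1 where "L1 = (\<lambda>u::real^'d. L (u, 0))"
  define L2 where "L2 = (\<lambda>u::real^'d. L (0, u))"
  have l1: "linear L1" unfolding L1_def
    using bounded_linear.linear[OF bounded_linear_compose[OF L bounded_linear_Pair[OF bounded_linear_ident bounded_linear_zero]]]
    by (simp add: o_def)
  have l2: "linear L2" unfolding L2_def
    using bounded_linear.linear[OF bounded_linear_compose[OF L bounded_linear_Pair[OF bounded_linear_zero bounded_linear_ident]]]
    by (simp add: o_def)
  have "L (u, v) = L1 u + L2 v" for u v
  proof -
    have "(u, v) = (u, 0) + (0, v)" by simp
    then show ?thesis unfolding L1_def L2_def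
      using bounded_linear.linear[OF L] by (metis linear_add)
  qed
  then have eq: "L (phi x) = (\<Sum>b\<in>Basis. L1 b * cos (2*pi*(b \<bullet> x) + 0)) + (\<Sum>b\<in>Basis. L2 b * cos (2*pi*(b \<bullet> x) + (-(pi/2))))" for x
    unfolding phi_def using l1 l2
    by (simp add: linear_sum linear_scale inner_commute cos_diff mult.commute)
  show ?thesis unfolding eq
    by (intro trig.add trig_sum trig.base Basis_int) auto
qed

lemma trig_poly: "real_polynomial_function p \<Longrightarrow> trig (\<lambda>x. p (phi x))"
proof (induction rule: real_polynomial_function.induct)
  case (linear f)
  then show ?case by (rule trig_lin)
next
  case (const c)
  then show ?case by (rule trig_const)
next
  case (add f g)
  show ?case by (rule trig.add[OF add.IH])
next
  case (mult f g)
  show ?case by (rule trig_mult[OF mult.IH])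
qed

lemma sum_Basis_inner: "b \<in> Basis \<Longrightarrow> (\<Sum>b'\<in>Basis. g b' *\<^sub>R b') \<bullet> (b::'a::euclidean_space) = g b"
  by (simp add: inner_sum_left inner_Basis if_distrib sum.delta cong: if_cong)

lemma phi_per:
  assumes z: "\<forall>i. z $ i \<in> \<int>"
  shows "phi (x + z) = phi (x::real^'d)"
proof -
  have zb: "z \<bullet> b \<in> \<int>" if "b \<in> Basis" for b
    using inner_Ints[OF Basis_int[OF that] z] by (simp add: inner_commute)
  have c: "cos (2*pi*((x + z) \<bullet> b)) = cos (2*pi*(x \<bullet> b))" if "b \<in> Basis" for b
    using per_cos[OF zb[OF that], of "2*pi*(x \<bullet> b)"] by (simp add: inner_add_left algebra_simps)
  have s: "sin (2*pi*((x + z) \<bullet> b)) = sin (2*pi*(x \<bullet> b))" if "b \<in> Basis" for b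
    using per_sin[OF zb[OF that], of "2*pi*(x \<bullet> b)"] by (simp add: inner_add_left algebra_simps)
  show ?thesis unfolding phi_def using c s by (auto intro!: sum.cong)
qed

lemma phi_inj:
  assumes "phi x = phi (y::real^'d)"
  shows "\<forall>i. (x - y) $ i \<in> \<int>"
proof
  fix i
  define b :: "real^'d" where "b = axis i 1"
  have b: "b \<in> Basis" unfolding b_def by simp
  have "fst (phi x) \<bullet> b = fst (phi y) \<bullet> b" "snd (phi x) \<bullet> b = snd (phi y) \<bullet> b" using assms by auto
  then have "cos (2*pi*(x \<bullet> b)) = cos (2*pi*(y \<bullet> b))" "sin (2*pi*(x \<bullet> b)) = sin (2*pi*(y \<bullet> b))"
    unfolding phi_def using b by (simp_all add: sum_Basis_inner)
  then obtain m :: int where "2*pi*(x \<bullet> b) = 2*pi*(y \<bullet> b) + 2*pi*m"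
    using sin_cos_eq_iff by metis
  then have "(2*pi) * (x \<bullet> b - y \<bullet> b - m) = 0" by (simp add: algebra_simps)
  then have "x \<bullet> b - y \<bullet> b - m = 0" by simp
  then have "x \<bullet> b - y \<bullet> b = m" by simp
  moreover have "x \<bullet> b = x $ i" "y \<bullet> b = y $ i" unfolding b_def by (simp_all add: cart_eq_inner_axis)
  ultimately show "(x - y) $ i \<in> \<int>" by simp
qed

lemma red_box: "\<exists>x'\<in>cbox 0 1. \<forall>i. (x - x') $ i \<in> \<int>" for x :: "real^'d"
proof (intro bexI allI)
  let ?x' = "\<chi> i. x $ i - of_int \<lfloor>x $ i\<rfloor>"
  show "(x - ?x') $ i \<in> \<int>" for i by simp
  show "?x' \<in> cbox 0 1" unfolding mem_box_cart
    by (auto simp: of_int_floor_le) (smt (verit) real_of_int_floor_add_one_gt)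
qed

lemma phi_cont: "continuous_on UNIV phi"
  unfolding phi_def by (intro continuous_intros)

lemma trig_dense:
  fixes f :: "real^'d \<Rightarrow> real"
  assumes tt: "torus_test f" and e: "0 < e"
  shows "\<exists>h. trig h \<and> (\<forall>x. \<bar>f x - h x\<bar> < e)"
proof -
  have fc: "continuous_on UNIV f" and per: "\<And>x z. \<forall>i. z $ i \<in> \<int> \<Longrightarrow> f (x + z) = f x"
    using tt unfolding torus_test_def periodic_fn_def by auto
  have feq: "f x = f y" if "phi x = phi y" for x y
    using per[OF phi_inj[OF that], of y] by simp
  define S :: "(real^'d) set" where "S = cbox 0 1"
  define K where "K = phi ` S"
  have cS: "compact S" unfolding S_def by simp
  have cK: "compact K" unfolding K_def
    by (rule compact_continuous_image[OF continuous_on_subset[OF phi_cont] cS]) simp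
  have q: "quotient_map (top_of_set S) (top_of_set K) phi"
    unfolding quotient_map_def
  proof (intro conjI allI impI)
    show "phi ` topspace (top_of_set S) = topspace (top_of_set K)" by (simp add: K_def)
    fix U assume "U \<subseteq> topspace (top_of_set K)"
    then have U: "U \<subseteq> K" by simp
    have "{x. x \<in> topspace (top_of_set S) \<and> phi x \<in> U} = S \<inter> phi -` U" by auto
    then show "openin (top_of_set S) {x. x \<in> topspace (top_of_set S) \<and> phi x \<in> U} = openin (top_of_set K) U"
      using Abstract_Topology_2.continuous_imp_quotient_map[OF continuous_on_subset[OF phi_cont subset_UNIV] K_def[symmetric] cS U] by simp
  qed
  have fcS: "continuous_map (top_of_set S) euclideanreal f"
    using continuous_on_subset[OF fc] by simp
  have feq': "\<And>x y. x \<in> topspace (top_of_set S) \<Longrightarrow> y \<in> topspace (top_of_set S) \<Longrightarrow> phi x = phi y \<Longrightarrow> f x = f y"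
    using feq by blast
  obtain F where Fc: "continuous_map (top_of_set K) euclideanreal F"
    and "F ` topspace (top_of_set K) = f ` topspace (top_of_set S)"
    and Fe0: "\<And>x. x \<in> topspace (top_of_set S) \<Longrightarrow> F (phi x) = f x"
    using quotient_map_lift_exists[OF q fcS feq'] by blast
  have Fe: "\<And>x. x \<in> S \<Longrightarrow> F (phi x) = f x" using Fe0 by simp
  have FcK: "continuous_on K F" using Fc by simp
  obtain g where gp: "polynomial_function g" and ge: "\<forall>y\<in>K. norm (F y - g y) < e"
    using Stone_Weierstrass_polynomial_function[OF cK FcK e] by blast
  show ?thesis
  proof (intro exI conjI allI)
    show "trig (\<lambda>x. g (phi x))"
      using gp by (intro trig_poly) (simp add: real_polynomial_function_eq)
    fix x
    obtain x' where x': "x' \<in> S" "\<forall>i. (x - x') $ i \<in> \<int>" using red_box[of x] unfolding S_def by blast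
    have px: "phi x = phi x'" using phi_per[OF x'(2), of x'] by simp
    have "f x = F (phi x')" using feq[OF px] Fe[OF x'(1)] by simp
    moreover have "phi x' \<in> K" unfolding K_def using x'(1) by simp
    ultimately show "\<bar>f x - g (phi x)\<bar> < e" using ge px by auto
  qed
qed

lemma tt_bounded:
  fixes f :: "real^'d \<Rightarrow> real"
  assumes tt: "torus_test f"
  shows "\<exists>B. \<forall>x. \<bar>f x\<bar> \<le> B"
proof -
  have fc: "continuous_on UNIV f" and per: "\<And>x z. \<forall>i. z $ i \<in> \<int> \<Longrightarrow> f (x + z) = f x"
    using tt unfolding torus_test_def periodic_fn_def by auto
  have "compact (f ` cbox 0 1)"
    by (rule compact_continuous_image[OF continuous_on_subset[OF fc]]) auto
  then obtain B where B: "\<forall>y\<in>f ` cbox 0 1. norm y \<le> B"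
    using compact_imp_bounded bounded_iff by metis
  show ?thesis
  proof (intro exI allI)
    fix x :: "real^'d"
    obtain x' where x': "x' \<in> cbox 0 1" "\<forall>i. (x - x') $ i \<in> \<int>" using red_box[of x] by blast
    have "f x = f x'" using per[OF x'(2), of x'] by simp
    then show "\<bar>f x\<bar> \<le> B" using B x'(1) by auto
  qed
qed

lemma int_bound:
  fixes g :: "'a \<Rightarrow> real"
  assumes "finite_measure M" "\<And>x. \<bar>g x\<bar> \<le> B"
  shows "\<bar>\<integral>x. g x \<partial>M\<bar> \<le> B * measure M (space M)"
proof -
  interpret finite_measure M by fact
  have "\<bar>\<integral>x. g x \<partial>M\<bar> \<le> \<integral>x. \<bar>g x\<bar> \<partial>M"
    using integral_norm_bound[of M g] by simp
  also have "\<dots> \<le> \<integral>x. B \<partial>M"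
  proof (cases "integrable M (\<lambda>x. \<bar>g x\<bar>)")
    case True
    then show ?thesis by (intro integral_mono) (auto simp: assms(2))
  next
    case False
    then have "(\<integral>x. \<bar>g x\<bar> \<partial>M) = 0" by (simp add: not_integrable_integral_eq)
    moreover have "0 \<le> B" using assms(2)[of undefined] by simp
    ultimately show ?thesis by simp
  qed
  also have "\<dots> = B * measure M (space M)" by (simp add: mult.commute)
  finally show ?thesis .
qed

theorem mainTheorem17:
  fixes \<theta> :: "nat \<Rightarrow> real^'d" and \<beta> :: real and r :: "nat \<Rightarrow> real" and k :: nat
    and \<nu> \<mu> :: "(real^'d) measure"
  assumes theta_nonneg: "\<forall>j<k. \<forall>i. 0 \<le> \<theta> j $ i"
    and beta_pos: "\<beta> > 0"
    and r_pos: "\<forall>j<k. r j > 0"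
    and nu_sets: "sets \<nu> = sets borel"
    and nu_finite: "finite_measure \<nu>"
    and nu_mass: "measure \<nu> UNIV = (\<Prod>j<k. 1 / (\<beta> * r j))"
    and nu_pos: "\<forall>s. (\<forall>j<k. 0 \<le> s j) \<longrightarrow>
        (\<forall>f. torus_test f \<and> (\<forall>x. 0 \<le> f x) \<longrightarrow>
             0 \<le> prod_ops \<beta> r \<theta> s k (\<lambda>g. \<integral>x. g x \<partial>\<nu>) f)"
    and mu_sets: "sets \<mu> = sets borel"
    and mu_finite: "finite_measure \<mu>"
    and mu_def: "\<forall>f. torus_test f \<longrightarrow>
        has_iter_lim k (\<lambda>s. (1 / (\<Prod>j<k. s j)) * prod_ops \<beta> r \<theta> s k (\<lambda>g. \<integral>x. g x \<partial>\<nu>) f)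
          (\<integral>x. f x \<partial>\<mu>)"
  shows "\<forall>f. torus_test f \<longrightarrow>
    (\<integral>x. f x \<partial>\<nu>) =
    (\<integral>w. exp (- (\<beta> * (\<Sum>j<k. w j * r j))) * (\<integral>x. f (x + (\<Sum>j<k. w j *\<^sub>R \<theta> j)) \<partial>\<mu>)
        \<partial>(PiM {..<k} (\<lambda>_. restrict_space lborel {0..})))"
proof (intro allI impI)
  fix f :: "real^'d \<Rightarrow> real"
  assume tt: "torus_test f"
  define P where "P = PiM {..<k} (\<lambda>_. restrict_space lborel ({0..}::real set))"
  define E where "E = (\<lambda>w::nat\<Rightarrow>real. exp (- (\<beta> * (\<Sum>j<k. w j * r j))))"
  have fc: "continuous_on UNIV f" using tt by (simp add: torus_test_def)
  obtain B where B: "\<And>x. \<bar>f x\<bar> \<le> B" using tt_bounded[OF tt] by blast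
  have "\<forall>m. \<exists>h. trig h \<and> (\<forall>x. \<bar>f x - h x\<bar> < 1 / (real m + 1))"
    using trig_dense[OF tt] by simp
  then obtain h where ht: "\<And>m. trig (h m)" and hf: "\<And>m x. \<bar>f x - h m x\<bar> < 1 / (real m + 1)"
    by metis
  have hc: "continuous_on UNIV (h m)" for m using trig_bc[OF ht] by blast
  have hB: "\<bar>h m x\<bar> \<le> B + 1" for m x
  proof -
    have "1 / (real m + 1) \<le> 1" by (simp add: field_simps)
    then show ?thesis using hf[of x m] B[of x] by linarith
  qed
  have hlim: "(\<lambda>m. h m x) \<longlonglongrightarrow> f x" for x
  proof -
    have "(\<lambda>m. 1 / (real m + 1)) \<longlonglongrightarrow> 0" using LIMSEQ_inverse_real_of_nat by (simp add: inverse_eq_divide add.commute)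
    then have "(\<lambda>m. f x - h m x) \<longlonglongrightarrow> 0"
    proof (rule Lim_null_comparison[rotated])
      show "\<forall>\<^sub>F m in sequentially. norm (f x - h m x) \<le> 1 / (real m + 1)"
      proof (intro always_eventually allI)
        fix m
        show "norm (f x - h m x) \<le> 1 / (real m + 1)" using hf[of x m] by simp
      qed
    qed
    then have "(\<lambda>m. f x - (f x - h m x)) \<longlonglongrightarrow> f x - 0" by (intro tendsto_intros)
    then show ?thesis by simp
  qed
  have id: "integrable P (RI \<mu> \<beta> r \<theta> k (h m)) \<and> (\<integral>x. h m x \<partial>\<nu>) = (\<integral>w. RI \<mu> \<beta> r \<theta> k (h m) w \<partial>P)" for m
    unfolding P_def by (rule trig_id[OF nu_finite nu_sets mu_finite mu_sets beta_pos r_pos mu_def ht])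
  have lim1: "(\<lambda>m. \<integral>x. h m x \<partial>\<nu>) \<longlonglongrightarrow> (\<integral>x. f x \<partial>\<nu>)"
    by (rule bc_dc[OF nu_finite nu_sets fc hc hB hlim])
  have RIlim: "(\<lambda>m. RI \<mu> \<beta> r \<theta> k (h m) w) \<longlonglongrightarrow> RI \<mu> \<beta> r \<theta> k f w" for w
  proof -
    define y where "y = (\<Sum>j<k. w j *\<^sub>R \<theta> j)"
    have "(\<lambda>m. \<integral>x. h m (x + y) \<partial>\<mu>) \<longlonglongrightarrow> (\<integral>x. f (x + y) \<partial>\<mu>)"
    proof (rule bc_dc[OF mu_finite mu_sets])
      show "continuous_on UNIV (\<lambda>x. f (x + y))"
        by (rule continuous_on_compose2[OF fc cont_shift]) simp
      show "continuous_on UNIV (\<lambda>x. h m (x + y))" for m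
        by (rule continuous_on_compose2[OF hc cont_shift]) simp
    qed (use hB hlim in auto)
    then show ?thesis unfolding RI_def y_def[symmetric] by (intro tendsto_intros)
  qed
  have spm: "space \<mu> = UNIV" using sets_eq_imp_space_eq[OF mu_sets] by simp
  have RIbound: "\<bar>RI \<mu> \<beta> r \<theta> k g w\<bar> \<le> E w * ((B + 1) * measure \<mu> UNIV)" if "\<And>x. \<bar>g x\<bar> \<le> B + 1" for g w
  proof -
    have "\<bar>\<integral>x. g (x + (\<Sum>j<k. w j *\<^sub>R \<theta> j)) \<partial>\<mu>\<bar> \<le> (B + 1) * measure \<mu> (space \<mu>)"
      by (rule int_bound[OF mu_finite]) (use that in auto)
    then show ?thesis unfolding RI_def E_def spm by (simp add: abs_mult mult_left_mono)
  qed
  have Eint: "integrable P E"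
  proof -
    interpret product_sigma_finite "\<lambda>_::nat. restrict_space lborel ({0..}::real set)" by (rule psf)
    have Rec: "0 < Re (cc \<beta> r \<theta> 0 j)" if "j < k" for j
      using beta_pos r_pos that by (simp add: cc_def)
    have "integrable P (\<lambda>w. \<Prod>j<k. exp (-(complex_of_real (w j) * cc \<beta> r \<theta> 0 j)))"
      unfolding P_def by (rule product_integrable_prod) (auto intro: exp_int1(1)[OF Rec])
    then have "integrable P (\<lambda>w. norm (\<Prod>j<k. exp (-(complex_of_real (w j) * cc \<beta> r \<theta> 0 j))))"
      by (rule integrable_norm)
    moreover have "norm (\<Prod>j<k. exp (-(complex_of_real (w j) * cc \<beta> r \<theta> 0 j))) = E w" for w
      unfolding exp_prod_cc E_def by (simp add: norm_mult)
    ultimately show ?thesis by simp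
  qed
  have RImeas: "RI \<mu> \<beta> r \<theta> k f \<in> borel_measurable P"
    by (rule borel_measurable_LIMSEQ_metric[OF _ RIlim]) (use id borel_measurable_integrable in blast)
  have lim2: "(\<lambda>m. \<integral>w. RI \<mu> \<beta> r \<theta> k (h m) w \<partial>P) \<longlonglongrightarrow> (\<integral>w. RI \<mu> \<beta> r \<theta> k f w \<partial>P)"
  proof (rule integral_dominated_convergence[where w="\<lambda>w. E w * ((B + 1) * measure \<mu> UNIV)"])
    show "RI \<mu> \<beta> r \<theta> k f \<in> borel_measurable P" by (rule RImeas)
    show "RI \<mu> \<beta> r \<theta> k (h m) \<in> borel_measurable P" for m using id borel_measurable_integrable by blast
    show "integrable P (\<lambda>w. E w * ((B + 1) * measure \<mu> UNIV))" using Eint by simp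
    show "AE w in P. (\<lambda>m. RI \<mu> \<beta> r \<theta> k (h m) w) \<longlonglongrightarrow> RI \<mu> \<beta> r \<theta> k f w" using RIlim by simp
    show "AE w in P. norm (RI \<mu> \<beta> r \<theta> k (h m) w) \<le> E w * ((B + 1) * measure \<mu> UNIV)" for m
      using RIbound[OF hB] by simp
  qed
  have "(\<integral>x. f x \<partial>\<nu>) = (\<integral>w. RI \<mu> \<beta> r \<theta> k f w \<partial>P)"
    using LIMSEQ_unique[OF lim1] lim2 id by simp
  then show "(\<integral>x. f x \<partial>\<nu>) =
    (\<integral>w. exp (- (\<beta> * (\<Sum>j<k. w j * r j))) * (\<integral>x. f (x + (\<Sum>j<k. w j *\<^sub>R \<theta> j)) \<partial>\<mu>)
        \<partial>(PiM {..<k} (\<lambda>_. restrict_space lborel {0..})))"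
    unfolding P_def RI_def .
qed

end
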